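(* Let $\alpha,\beta$ be real numbers with $\alpha \neq 0$, $\beta \neq 0$, $\beta \neq 1$ and $\alpha \neq \beta$. Let $g(x)=\alpha x(1-x)$ and $h(x)=\beta x(1-x)$, and let $x_\alpha=\frac{\alpha-1}{\alpha}$ and $x_\beta=\frac{\beta-1}{\beta}$ be their nontrivial fixed points. Then the two-point set $\Lambda=\{x_\alpha,x_\beta\}$ is a 2-point toss-and-catch, i.e. $h(x_\alpha)=x_\beta$, $g(x_\beta)=x_\alpha$ and $\Lambda=g(\Lambda)\cup h(\Lambda)$, if and only if $$\alpha=\frac{\beta}{\beta-1}.$$
   Context: For $\gamma\in\mathbb{R}$ let $f_\gamma(x)=\gamma x(1-x)$ denote the logistic map. The logistic IFS is the pair $\{g,h\}=\{f_\alpha,f_\beta\}$, where at each time step $g$ is applied with probability $p\in(0,1)$ and $h$ with probability $1-p$, independently. An invariant set of the IFS is a set $\Lambda$ with $\Lambda=g(\Lambda)\cup h(\Lambda)$; a finite invariant set with $n$ points is called an $n$-point toss-and-catch. In the 2-point toss-and-catch considered here, the fixed point of $g$ is sent by $h$ to the fixed point of $h$ and vice versa. *)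

theory Defs
  imports Complex_Main
begin

definition logistic :: "real \<Rightarrow> real \<Rightarrow> real" where
  "logistic \<gamma> x = \<gamma> * x * (1 - x)"

definition logistic_fix :: "real \<Rightarrow> real" where
  "logistic_fix \<gamma> = (\<gamma> - 1) / \<gamma>"

end

theory Submission
  imports Defs
begin

lemma key:
  fixes a b :: real
  assumes "a \<noteq> 0" "b \<noteq> 0" "a \<noteq> b"
  shows "logistic b (logistic_fix a) = logistic_fix b \<longleftrightarrow> a * b = a + b"
proof -
  have "logistic b (logistic_fix a) = logistic_fix b \<longleftrightarrow> b^2*(a-1) = a^2*(b-1)"
    using assms by (simp add: logistic_def logistic_fix_def field_simps power2_eq_square)
  also have "\<dots> \<longleftrightarrow> (b - a) * (a*b - (a+b)) = 0"
    by (simp add: algebra_simps power2_eq_square)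
  also have "\<dots> \<longleftrightarrow> a * b = a + b" using assms by simp
  finally show ?thesis .
qed

theorem mainTheorem1:
  fixes \<alpha> \<beta> :: real
  assumes "\<alpha> \<noteq> 0" and "\<beta> \<noteq> 0" and "\<beta> \<noteq> 1" and "\<alpha> \<noteq> \<beta>"
  shows "(logistic \<beta> (logistic_fix \<alpha>) = logistic_fix \<beta> \<and>
          logistic \<alpha> (logistic_fix \<beta>) = logistic_fix \<alpha> \<and>
          {logistic_fix \<alpha>, logistic_fix \<beta>} =
            logistic \<alpha> ` {logistic_fix \<alpha>, logistic_fix \<beta>} \<union>
            logistic \<beta> ` {logistic_fix \<alpha>, logistic_fix \<beta>})
         \<longleftrightarrow> \<alpha> = \<beta> / (\<beta> - 1)"
proof -
  have k1: "logistic \<beta> (logistic_fix \<alpha>) = logistic_fix \<beta> \<longleftrightarrow> \<alpha> * \<beta> = \<alpha> + \<beta>"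
    using key assms by blast
  have k2: "logistic \<alpha> (logistic_fix \<beta>) = logistic_fix \<alpha> \<longleftrightarrow> \<alpha> * \<beta> = \<alpha> + \<beta>"
    using key[of \<beta> \<alpha>] assms by (auto simp: algebra_simps)
  have fa: "logistic \<alpha> (logistic_fix \<alpha>) = logistic_fix \<alpha>"
    using assms by (simp add: logistic_def logistic_fix_def field_simps)
  have fb: "logistic \<beta> (logistic_fix \<beta>) = logistic_fix \<beta>"
    using assms by (simp add: logistic_def logistic_fix_def field_simps)
  have e: "\<alpha> * \<beta> = \<alpha> + \<beta> \<longleftrightarrow> \<alpha> = \<beta> / (\<beta> - 1)"
  proof -
    have "\<beta> - 1 \<noteq> 0" using assms by simp
    then show ?thesis by (simp add: field_simps)
  qed
  show ?thesis
  proof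
    assume "logistic \<beta> (logistic_fix \<alpha>) = logistic_fix \<beta> \<and>
          logistic \<alpha> (logistic_fix \<beta>) = logistic_fix \<alpha> \<and>
          {logistic_fix \<alpha>, logistic_fix \<beta>} =
            logistic \<alpha> ` {logistic_fix \<alpha>, logistic_fix \<beta>} \<union>
            logistic \<beta> ` {logistic_fix \<alpha>, logistic_fix \<beta>}"
    then show "\<alpha> = \<beta> / (\<beta> - 1)" using k1 e by blast
  next
    assume h: "\<alpha> = \<beta> / (\<beta> - 1)"
    then have m: "\<alpha> * \<beta> = \<alpha> + \<beta>" using e by blast
    have 1: "logistic \<beta> (logistic_fix \<alpha>) = logistic_fix \<beta>" using k1 m by blast
    have 2: "logistic \<alpha> (logistic_fix \<beta>) = logistic_fix \<alpha>" using k2 m by blast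
    show "logistic \<beta> (logistic_fix \<alpha>) = logistic_fix \<beta> \<and>
          logistic \<alpha> (logistic_fix \<beta>) = logistic_fix \<alpha> \<and>
          {logistic_fix \<alpha>, logistic_fix \<beta>} =
            logistic \<alpha> ` {logistic_fix \<alpha>, logistic_fix \<beta>} \<union>
            logistic \<beta> ` {logistic_fix \<alpha>, logistic_fix \<beta>}"
      using 1 2 fa fb by auto
  qed
qed

end
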